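(* Let $K$ be a field of characteristic $0$, let $S=K[x_1,\ldots,x_n]$ be graded by $\deg x_i=a_i>0$, and let $I\subset S$ be a homogeneous unmixed ideal of height two. Suppose that the symbolic Rees algebra $\bigoplus_{k\ge0} I^{(k)}t^k\subseteq S[t]$ is generated in degrees $1$ and $2$, and that $(I^{(2)})^2\subseteq I^3$. Then $(I^{(k-1)})^2\subseteq I^k$ for all $k\ge2$.
   Context: The $m$-th symbolic power is $I^{(m)}=\bigcup_{t\ge1} I^m:L^t$, where $L$ is the intersection of all associated, non-minimal prime ideals of $I^m$; $I^{(0)}=S$. *)

theory Defs
  imports "HOL-Library.Poly_Mapping" "HOL-Library.Extended_Nat"
begin

definition is_ideal :: "'a::comm_ring_1 set \<Rightarrow> bool" where
  "is_ideal I \<longleftrightarrow> 0 \<in> I \<and> (\<forall>x\<in>I. \<forall>y\<in>I. x + y \<in> I) \<and> (\<forall>r. \<forall>x\<in>I. r * x \<in> I)"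

definition ideal_gen :: "'a::comm_ring_1 set \<Rightarrow> 'a set" where
  "ideal_gen X = \<Inter>{J. is_ideal J \<and> X \<subseteq> J}"

definition ideal_prod :: "'a::comm_ring_1 set \<Rightarrow> 'a set \<Rightarrow> 'a set" where
  "ideal_prod I J = ideal_gen {i * j | i j. i \<in> I \<and> j \<in> J}"

fun ideal_pow :: "'a::comm_ring_1 set \<Rightarrow> nat \<Rightarrow> 'a set" where
  "ideal_pow I 0 = UNIV"
| "ideal_pow I (Suc k) = ideal_prod I (ideal_pow I k)"

definition ideal_colon :: "'a::comm_ring_1 set \<Rightarrow> 'a set \<Rightarrow> 'a set" where
  "ideal_colon I J = {f. \<forall>g\<in>J. f * g \<in> I}"

definition prime_ideal :: "'a::comm_ring_1 set \<Rightarrow> bool" where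
  "prime_ideal P \<longleftrightarrow> is_ideal P \<and> P \<noteq> UNIV \<and> (\<forall>a b. a * b \<in> P \<longrightarrow> a \<in> P \<or> b \<in> P)"

definition ass_primes :: "'a::comm_ring_1 set \<Rightarrow> 'a set set" where
  "ass_primes I = {P. prime_ideal P \<and> (\<exists>f. P = ideal_colon I {f})}"

definition minimal_prime_over :: "'a::comm_ring_1 set \<Rightarrow> 'a set \<Rightarrow> bool" where
  "minimal_prime_over I P \<longleftrightarrow> prime_ideal P \<and> I \<subseteq> P \<and>
     (\<forall>Q. prime_ideal Q \<and> I \<subseteq> Q \<and> Q \<subseteq> P \<longrightarrow> Q = P)"

definition height_prime :: "'a::comm_ring_1 set \<Rightarrow> enat" where
  "height_prime P = Sup {enat n | n. \<exists>c :: nat \<Rightarrow> 'a set.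
      (\<forall>i\<le>n. prime_ideal (c i)) \<and> (\<forall>i<n. c i \<subset> c (Suc i)) \<and> c n = P}"

definition ideal_height :: "'a::comm_ring_1 set \<Rightarrow> enat" where
  "ideal_height I = Inf {height_prime P | P. prime_ideal P \<and> I \<subseteq> P}"

definition unmixed :: "'a::comm_ring_1 set \<Rightarrow> bool" where
  "unmixed I \<longleftrightarrow> (\<forall>P\<in>ass_primes I. height_prime P = ideal_height I)"

definition symb_L :: "'a::comm_ring_1 set \<Rightarrow> nat \<Rightarrow> 'a set" where
  "symb_L I m = \<Inter>{P \<in> ass_primes (ideal_pow I m). \<not> minimal_prime_over (ideal_pow I m) P}"

definition symb_pow :: "'a::comm_ring_1 set \<Rightarrow> nat \<Rightarrow> 'a set" where
  "symb_pow I m = (if m = 0 then UNIV else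
     (\<Union>t\<in>{1..}. ideal_colon (ideal_pow I m) (ideal_pow (symb_L I m) t)))"

text \<open>The symbolic Rees algebra is generated in degrees 1 and 2: each graded piece I^(k)
  equals the degree-k part of the S-subalgebra of S[t] generated by I^(1) t and I^(2) t^2,
  namely the sum over i + 2j = k of (I^(1))^i (I^(2))^j.\<close>
definition symb_rees_gen_deg_1_2 :: "'a::comm_ring_1 set \<Rightarrow> bool" where
  "symb_rees_gen_deg_1_2 I \<longleftrightarrow> (\<forall>k. symb_pow I k =
     ideal_gen (\<Union>{ideal_prod (ideal_pow (symb_pow I 1) i) (ideal_pow (symb_pow I 2) j)
                   | i j. i + 2 * j = k}))"

type_synonym ('v, 'k) mpoly = "('v \<Rightarrow>\<^sub>0 nat) \<Rightarrow>\<^sub>0 'k"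

definition wdeg :: "('v::finite \<Rightarrow> nat) \<Rightarrow> ('v \<Rightarrow>\<^sub>0 nat) \<Rightarrow> nat" where
  "wdeg a m = (\<Sum>v\<in>UNIV. Poly_Mapping.lookup m v * a v)"

definition homogeneous :: "('v::finite \<Rightarrow> nat) \<Rightarrow> ('v, 'k::comm_ring_1) mpoly \<Rightarrow> bool" where
  "homogeneous a f \<longleftrightarrow> (\<exists>d. \<forall>m\<in>Poly_Mapping.keys f. wdeg a m = d)"

definition homogeneous_ideal :: "('v::finite \<Rightarrow> nat) \<Rightarrow> ('v, 'k::comm_ring_1) mpoly set \<Rightarrow> bool" where
  "homogeneous_ideal a I \<longleftrightarrow> is_ideal I \<and> I = ideal_gen {f \<in> I. homogeneous a f}"

end

theory Submission
  imports Defs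
begin

lemma gen_ideal: "is_ideal (ideal_gen X)"
  unfolding ideal_gen_def is_ideal_def by auto

lemma gen_sup: "X \<subseteq> ideal_gen X"
  unfolding ideal_gen_def by auto

lemma gen_least: "is_ideal J \<Longrightarrow> X \<subseteq> J \<Longrightarrow> ideal_gen X \<subseteq> J"
  unfolding ideal_gen_def by auto

lemma ideal_mulL: "is_ideal J \<Longrightarrow> x \<in> J \<Longrightarrow> r * x \<in> J"
  unfolding is_ideal_def by auto

lemma ideal_mulR: "is_ideal J \<Longrightarrow> x \<in> J \<Longrightarrow> x * r \<in> J"
  unfolding is_ideal_def by (auto simp: mult.commute)

lemma UNIV_ideal: "is_ideal (UNIV :: 'a::comm_ring_1 set)"
  unfolding is_ideal_def by auto

lemma prod_ideal: "is_ideal (ideal_prod A B)"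
  unfolding ideal_prod_def by (rule gen_ideal)

lemma prod_mem: "a \<in> A \<Longrightarrow> b \<in> B \<Longrightarrow> a * b \<in> ideal_prod A B"
  unfolding ideal_prod_def by (rule subsetD[OF gen_sup]) blast

lemma prod_le: "is_ideal T \<Longrightarrow> (\<And>a b. a \<in> A \<Longrightarrow> b \<in> B \<Longrightarrow> a * b \<in> T) \<Longrightarrow> ideal_prod A B \<subseteq> T"
  unfolding ideal_prod_def by (rule gen_least) auto

lemma gen_mult:
  assumes T: "is_ideal T" and h: "\<And>a b. a \<in> X \<Longrightarrow> b \<in> Y \<Longrightarrow> a * b \<in> T"
    and x: "x \<in> ideal_gen X" and y: "y \<in> ideal_gen Y"
  shows "x * y \<in> T"
proof -
  have 1: "a * y \<in> T" if a: "a \<in> X" for a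
  proof -
    have "is_ideal {b. a * b \<in> T}" using T unfolding is_ideal_def
      by (auto simp: distrib_left) (metis mult.left_commute)
    moreover have "Y \<subseteq> {b. a * b \<in> T}" using h a by auto
    ultimately have "ideal_gen Y \<subseteq> {b. a * b \<in> T}" by (rule gen_least)
    then show ?thesis using y by auto
  qed
  have "is_ideal {a. a * y \<in> T}" using T unfolding is_ideal_def
    by (auto simp: distrib_right mult.assoc)
  moreover have "X \<subseteq> {a. a * y \<in> T}" using 1 by auto
  ultimately have "ideal_gen X \<subseteq> {a. a * y \<in> T}" by (rule gen_least)
  then show ?thesis using x by auto
qed

lemma gen_prod_le:
  assumes "is_ideal T" "\<And>a b. a \<in> X \<Longrightarrow> b \<in> Y \<Longrightarrow> a * b \<in> T"
  shows "ideal_prod (ideal_gen X) (ideal_gen Y) \<subseteq> T"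
  apply (rule prod_le[OF assms(1)])
  apply (rule gen_mult[OF assms])
  by assumption+

lemma prod_comm: "ideal_prod A B = ideal_prod B A"
proof -
  have "{i * j | i j. i \<in> A \<and> j \<in> B} = {i * j | i j. i \<in> B \<and> j \<in> A}"
    by (auto, (metis mult.commute)+)
  then show ?thesis unfolding ideal_prod_def by simp
qed

lemma prod_assoc: "ideal_prod (ideal_prod A B) C = ideal_prod A (ideal_prod B C)"
proof
  show "ideal_prod (ideal_prod A B) C \<subseteq> ideal_prod A (ideal_prod B C)"
  proof (rule prod_le[OF prod_ideal])
    fix x c assume x: "x \<in> ideal_prod A B" and c: "c \<in> C"
    have x': "x \<in> ideal_gen {i * j | i j. i \<in> A \<and> j \<in> B}" using x by (simp add: ideal_prod_def)
    show "x * c \<in> ideal_prod A (ideal_prod B C)"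
    proof (rule gen_mult[OF prod_ideal _ x'])
      show "c \<in> ideal_gen C" using c gen_sup[of C] by auto
      fix u v assume "u \<in> {i * j | i j. i \<in> A \<and> j \<in> B}" "v \<in> C"
      then obtain i j where "u = i * j" "i \<in> A" "j \<in> B" by auto
      then show "u * v \<in> ideal_prod A (ideal_prod B C)"
        using \<open>v \<in> C\<close> by (simp add: mult.assoc prod_mem)
    qed
  qed
  show "ideal_prod A (ideal_prod B C) \<subseteq> ideal_prod (ideal_prod A B) C"
  proof (rule prod_le[OF prod_ideal])
    fix a x assume a: "a \<in> A" and x: "x \<in> ideal_prod B C"
    have x': "x \<in> ideal_gen {i * j | i j. i \<in> B \<and> j \<in> C}" using x by (simp add: ideal_prod_def)
    have a': "a \<in> ideal_gen A" using a gen_sup[of A] by auto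
    show "a * x \<in> ideal_prod (ideal_prod A B) C"
    proof (rule gen_mult[OF prod_ideal _ a' x'])
      fix u v assume "u \<in> A" "v \<in> {i * j | i j. i \<in> B \<and> j \<in> C}"
      then obtain i j where "v = i * j" "i \<in> B" "j \<in> C" by auto
      then show "u * v \<in> ideal_prod (ideal_prod A B) C"
        using \<open>u \<in> A\<close> by (simp add: mult.assoc[symmetric] prod_mem)
    qed
  qed
qed

lemma prod_lcomm: "ideal_prod A (ideal_prod B C) = ideal_prod B (ideal_prod A C)"
  by (metis prod_assoc prod_comm)

lemma prod_mono: "A \<subseteq> A' \<Longrightarrow> B \<subseteq> B' \<Longrightarrow> ideal_prod A B \<subseteq> ideal_prod A' B'"
  by (rule prod_le[OF prod_ideal]) (auto intro: prod_mem)

lemma prod_sub_left: "is_ideal A \<Longrightarrow> ideal_prod A B \<subseteq> A"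
  by (rule prod_le) (auto intro: ideal_mulR)

lemma prod_UNIV: "is_ideal A \<Longrightarrow> ideal_prod A UNIV = A"
  using prod_sub_left[of A UNIV] prod_mem[of _ A 1 UNIV] by auto

lemma pow_ideal: "is_ideal (ideal_pow A n)"
  by (cases n) (auto simp: UNIV_ideal prod_ideal)

lemma pow_add: "ideal_pow A (m + n) = ideal_prod (ideal_pow A m) (ideal_pow A n)"
proof (induction m)
  case 0
  then show ?case using prod_UNIV[OF pow_ideal, of A n] by (simp add: prod_comm)
next
  case (Suc m)
  then show ?case by (simp add: prod_assoc)
qed

lemma pow_mono: "A \<subseteq> B \<Longrightarrow> ideal_pow A n \<subseteq> ideal_pow B n"
  by (induction n) (simp_all add: prod_mono)

lemma pow_anti: "m \<le> n \<Longrightarrow> ideal_pow A n \<subseteq> ideal_pow A m"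
proof -
  assume "m \<le> n"
  then obtain d where "n = m + d" using le_Suc_ex by blast
  then have "ideal_pow A n = ideal_prod (ideal_pow A m) (ideal_pow A d)"
    using pow_add[of A m d] by (rule ssubst)
  then show ?thesis using prod_sub_left[OF pow_ideal, of A m "ideal_pow A d"]
    by (rule ssubst)
qed

lemma pow_two: "is_ideal J \<Longrightarrow> ideal_pow J 2 = ideal_prod J J"
  by (simp add: numeral_2_eq_2 prod_UNIV)

lemma pow_even:
  assumes J: "is_ideal J" and h: "ideal_prod J J \<subseteq> ideal_pow I 3"
  shows "ideal_pow J (2 * q) \<subseteq> ideal_pow I (3 * q)"
proof (induction q)
  case 0 then show ?case by simp
next
  case (Suc q)
  have "ideal_pow J (2 * Suc q) = ideal_prod (ideal_pow J 2) (ideal_pow J (2 * q))"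
    using pow_add[of J 2 "2*q"] by simp
  also have "\<dots> \<subseteq> ideal_prod (ideal_pow I 3) (ideal_pow I (3 * q))"
    using Suc h by (intro prod_mono) (auto simp: pow_two[OF J])
  also have "\<dots> = ideal_pow I (3 * Suc q)" using pow_add[of I 3 "3*q"] by simp
  finally show ?case .
qed

lemma one_pow_UNIV: "(1::'a::comm_ring_1) \<in> ideal_pow UNIV t"
  using prod_mem[of 1 UNIV 1] by (induction t) auto

lemma symb1_sub:
  fixes I :: "'a::comm_ring_1 set"
  assumes I: "is_ideal I" and un: "unmixed I" and h: "ideal_height I = 2"
  shows "symb_pow I 1 \<subseteq> I"
proof -
  have p1: "ideal_pow I 1 = I" using I by (simp add: prod_UNIV)
  have empty: "{P \<in> ass_primes I. \<not> minimal_prime_over I P} = {}"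
  proof (rule ccontr)
    assume "{P \<in> ass_primes I. \<not> minimal_prime_over I P} \<noteq> {}"
    then obtain P where P: "P \<in> ass_primes I" "\<not> minimal_prime_over I P" by blast
    then obtain f where Pp: "prime_ideal P" and Pf: "P = ideal_colon I {f}"
      unfolding ass_primes_def by auto
    have "I \<subseteq> P" using Pf I by (auto simp: ideal_colon_def intro: ideal_mulR)
    then obtain Q where Q: "prime_ideal Q" "I \<subseteq> Q" "Q \<subseteq> P" "Q \<noteq> P"
      using P(2) Pp unfolding minimal_prime_over_def by auto
    have hP: "height_prime P = 2" using un P(1) h unfolding unmixed_def by auto
    have "ideal_height I \<le> height_prime Q"
      unfolding ideal_height_def using Q by (auto intro: Inf_lower)
    then have hQ: "2 \<le> height_prime Q" using h by simp
    define SQ where "SQ = {enat n | n. \<exists>c :: nat \<Rightarrow> 'a set.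
      (\<forall>i\<le>n. prime_ideal (c i)) \<and> (\<forall>i<n. c i \<subset> c (Suc i)) \<and> c n = Q}"
    have "\<exists>x\<in>SQ. \<not> x \<le> 1"
    proof (rule ccontr)
      assume "\<not> ?thesis"
      then have "Sup SQ \<le> 1" by (auto intro: Sup_least)
      moreover have "height_prime Q = Sup SQ" unfolding height_prime_def SQ_def by simp
      ultimately have "(2::enat) \<le> 1" using hQ by (metis order_trans)
      then show False by simp
    qed
    then obtain n c where n: "\<not> enat n \<le> 1" and c: "\<forall>i\<le>n. prime_ideal (c i)"
      "\<forall>i<n. c i \<subset> c (Suc i)" "c n = Q"
      unfolding SQ_def by auto
    define c' where "c' = c(Suc n := P)"
    have "\<forall>i\<le>Suc n. prime_ideal (c' i)" using c Pp unfolding c'_def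
      by (auto simp: le_Suc_eq)
    moreover have "\<forall>i<Suc n. c' i \<subset> c' (Suc i)" using c Q unfolding c'_def
      by (auto simp: less_Suc_eq)
    moreover have "c' (Suc n) = P" unfolding c'_def by simp
    ultimately have "enat (Suc n) \<le> height_prime P"
      unfolding height_prime_def by (intro Sup_upper) blast
    then have "enat (Suc n) \<le> enat 2" using hP by (simp add: numeral_eq_enat)
    then have "Suc n \<le> 2" by simp
    moreover have "\<not> n \<le> 1" using n by (simp add: one_enat_def)
    ultimately show False by simp
  qed
  then have L: "symb_L I 1 = UNIV" unfolding symb_L_def p1 by auto
  show ?thesis
  proof
    fix x assume "x \<in> symb_pow I 1"
    then obtain t where "x \<in> ideal_colon I (ideal_pow UNIV t)"
      unfolding symb_pow_def L p1 by auto
    then show "x \<in> I" using one_pow_UNIV[of t] unfolding ideal_colon_def by force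
  qed
qed


lemma M_prod:
  "ideal_prod (ideal_prod (ideal_pow A a) (ideal_pow B b)) (ideal_prod (ideal_pow A c) (ideal_pow B d))
   = ideal_prod (ideal_pow A (a + c)) (ideal_pow B (b + d))"
proof -
  have "ideal_prod (ideal_pow A (a + c)) (ideal_pow B (b + d))
      = ideal_prod (ideal_prod (ideal_pow A a) (ideal_pow A c)) (ideal_prod (ideal_pow B b) (ideal_pow B d))"
    by (simp only: pow_add)
  also have "\<dots> = ideal_prod (ideal_pow A a) (ideal_prod (ideal_pow A c) (ideal_prod (ideal_pow B b) (ideal_pow B d)))"
    by (rule prod_assoc)
  also have "ideal_prod (ideal_pow A c) (ideal_prod (ideal_pow B b) (ideal_pow B d))
     = ideal_prod (ideal_pow B b) (ideal_prod (ideal_pow A c) (ideal_pow B d))"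
    by (rule prod_lcomm)
  also have "ideal_prod (ideal_pow A a) (ideal_prod (ideal_pow B b) (ideal_prod (ideal_pow A c) (ideal_pow B d)))
     = ideal_prod (ideal_prod (ideal_pow A a) (ideal_pow B b)) (ideal_prod (ideal_pow A c) (ideal_pow B d))"
    by (rule prod_assoc[symmetric])
  finally show ?thesis by simp
qed

lemma key:
  assumes I1: "I1 \<subseteq> I" and J: "is_ideal J" and I1J: "ideal_pow I1 2 \<subseteq> J"
    and hJ: "ideal_prod J J \<subseteq> ideal_pow I 3"
    and sj: "s + j \<ge> 1" and odd: "odd j \<longrightarrow> s \<ge> 1"
  shows "ideal_prod (ideal_pow I1 (2 * s)) (ideal_pow J j) \<subseteq> ideal_pow I (s + j + 1)"
proof (cases "even j")
  case True
  then obtain q where q: "j = 2 * q" by blast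
  have "ideal_prod (ideal_pow I1 (2 * s)) (ideal_pow J j)
      \<subseteq> ideal_prod (ideal_pow I (2 * s)) (ideal_pow I (3 * q))"
    using q pow_even[OF J hJ, of q] pow_mono[OF I1, of "2*s"] by (intro prod_mono) auto
  also have "\<dots> = ideal_pow I (2 * s + 3 * q)" by (rule pow_add[symmetric])
  also have "\<dots> \<subseteq> ideal_pow I (s + j + 1)" using q sj by (intro pow_anti) auto
  finally show ?thesis .
next
  case False
  then have oj: "odd j" by simp
  then obtain q where q0: "j = 2 * q + 1" by (rule oddE)
  then have q: "j = Suc (2 * q)" by simp
  have "s \<noteq> 0" using oj odd by simp
  then obtain t where t: "s = Suc t" using not0_implies_Suc by blast
  have "2 * s = 2 * t + 2" using t by simp
  then have e1: "ideal_pow I1 (2 * s) = ideal_prod (ideal_pow I1 (2 * t)) (ideal_pow I1 2)"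
    by (simp only: pow_add)
  have e2: "ideal_pow J j = ideal_prod J (ideal_pow J (2 * q))" unfolding q by (rule ideal_pow.simps(2))
  have "ideal_prod (ideal_pow I1 (2 * s)) (ideal_pow J j)
     = ideal_prod (ideal_pow I1 (2 * t)) (ideal_prod (ideal_prod (ideal_pow I1 2) J) (ideal_pow J (2 * q)))"
    unfolding e1 e2 by (simp only: prod_assoc)
  also have "\<dots> \<subseteq> ideal_prod (ideal_pow I (2 * t)) (ideal_prod (ideal_pow I 3) (ideal_pow I (3 * q)))"
  proof (intro prod_mono)
    show "ideal_pow I1 (2 * t) \<subseteq> ideal_pow I (2 * t)" using I1 by (rule pow_mono)
    show "ideal_prod (ideal_pow I1 2) J \<subseteq> ideal_pow I 3"
      using prod_mono[OF I1J order_refl[of J]] hJ by (rule order_trans)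
    show "ideal_pow J (2 * q) \<subseteq> ideal_pow I (3 * q)" by (rule pow_even[OF J hJ])
  qed
  also have "\<dots> = ideal_pow I (2 * t + (3 + 3 * q))" by (simp only: pow_add)
  also have "\<dots> \<subseteq> ideal_pow I (s + j + 1)" using q t by (intro pow_anti) auto
  finally show ?thesis .
qed

theorem proposition2p9:
  fixes a :: "'v::finite \<Rightarrow> nat"
    and I :: "('v, 'k::field_char_0) mpoly set"
  assumes "\<forall>v. a v > 0"
    and "homogeneous_ideal a I"
    and "unmixed I"
    and "ideal_height I = 2"
    and "symb_rees_gen_deg_1_2 I"
    and "ideal_prod (symb_pow I 2) (symb_pow I 2) \<subseteq> ideal_pow I 3"
  shows "\<forall>k\<ge>2. ideal_prod (symb_pow I (k - 1)) (symb_pow I (k - 1)) \<subseteq> ideal_pow I k"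
proof (intro allI impI)
  fix k :: nat assume k: "k \<ge> 2"
  define I1 where "I1 = symb_pow I 1"
  define J where "J = symb_pow I 2"
  define M where "M = (\<lambda>i j. ideal_prod (ideal_pow I1 i) (ideal_pow J j))"
  have gen: "\<And>n. symb_pow I n = ideal_gen (\<Union>{M i j | i j. i + 2 * j = n})"
    using assms(5) unfolding symb_rees_gen_deg_1_2_def M_def I1_def J_def by blast
  have Iid: "is_ideal I" using assms(2) unfolding homogeneous_ideal_def by simp
  have I1I: "I1 \<subseteq> I" unfolding I1_def by (rule symb1_sub[OF Iid assms(3) assms(4)])
  have Jeq: "J = ideal_gen (\<Union>{M i j | i j. i + 2 * j = 2})"
    using J_def gen[of 2] by (rule trans)
  have Jid: "is_ideal J" using gen_ideal[of "\<Union>{M i j | i j. i + 2 * j = 2}"] Jeq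
    by argo
  have "M 2 0 \<in> {M i j | i j. i + 2 * j = 2}"
    by (rule CollectI, rule exI[of _ 2], rule exI[of _ 0]) simp
  then have "M 2 0 \<subseteq> \<Union>{M i j | i j. i + 2 * j = 2}" by (rule Union_upper)
  also have "\<dots> \<subseteq> J" using gen_sup[of "\<Union>{M i j | i j. i + 2 * j = 2}"] Jeq
    by argo
  finally have "M 2 0 \<subseteq> J" .
  then have I1J: "ideal_pow I1 2 \<subseteq> J" unfolding M_def by (simp add: prod_UNIV pow_ideal)
  have hJ: "ideal_prod J J \<subseteq> ideal_pow I 3" using assms(6) unfolding J_def .
  show "ideal_prod (symb_pow I (k - 1)) (symb_pow I (k - 1)) \<subseteq> ideal_pow I k"
    unfolding gen[of "k - 1"]
  proof (rule gen_prod_le[OF pow_ideal])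
    fix x y assume x: "x \<in> \<Union>{M i j | i j. i + 2 * j = k - 1}"
      and y: "y \<in> \<Union>{M i j | i j. i + 2 * j = k - 1}"
    then obtain i1 j1 i2 j2 where x': "x \<in> M i1 j1" "i1 + 2 * j1 = k - 1"
      and y': "y \<in> M i2 j2" "i2 + 2 * j2 = k - 1" by blast
    have "x * y \<in> M (i1 + i2) (j1 + j2)"
      using prod_mem[OF x'(1) y'(1)] unfolding M_def M_prod .
    moreover define s where "s = k - 1 - j1 - j2"
    have ii: "i1 + i2 = 2 * s" using x'(2) y'(2) k unfolding s_def by simp
    have "M (2 * s) (j1 + j2) \<subseteq> ideal_pow I (s + (j1 + j2) + 1)"
      unfolding M_def
    proof (rule key[OF I1I Jid I1J hJ])
      show "1 \<le> s + (j1 + j2)" using x'(2) y'(2) k unfolding s_def by simp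
      show "odd (j1 + j2) \<longrightarrow> 1 \<le> s"
      proof
        assume o: "odd (j1 + j2)"
        show "1 \<le> s"
        proof (rule ccontr)
          assume "\<not> 1 \<le> s"
          then have "s = 0" by simp
          then have "j1 = j2" using ii x'(2) y'(2) by simp
          then show False using o by simp
        qed
      qed
    qed
    moreover have "s + (j1 + j2) + 1 = k" using x'(2) y'(2) k unfolding s_def by simp
    ultimately show "x * y \<in> ideal_pow I k" using ii by auto
  qed
qed

end
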